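(* Consider the partition posets of $\{1,\dots,n\}$ ordered by refinement (the operadic partition posets of the commutative operad $\operatorname{Com}$), with the labelling which labels the edge between a partition $(A_1,\dots,A_p)$ and the partition obtained by merging two parts $A_i$ and $A_j$ by $\max(\min A_i,\min A_j)$. This labelling is compatible with isomorphisms of subposets.
   Context: $\operatorname{Com}$ is the basic-set operad with a single element $e_n$ in each arity $n\ge1$, with $\gamma(e_p;e_{k_1},\dots,e_{k_p})=e_{k_1+\dots+k_p}$, generated by a binary symmetric operation; its $\operatorname{Com}$-partitions of a set are the usual set partitions and the order is refinement. For a covering $\lambda\prec\omega$ merging $A_i$ and $A_j$, set $D_\lambda^\omega=\{\min A_i,\min A_j\}$ and $\delta_\lambda^\omega$ the element $e_2$ on these two points; for a general $\lambda\le\omega$, $D_\lambda^\omega$ is the set of minima of the parts of $\lambda$ lying in parts of $\omega$ which are not parts of $\lambda$, and $\delta_\lambda^\omega$ the corresponding partition of $D_\lambda^\omega$ induced by $\omega$. Two interval subposets $\Pi_1,\Pi_2$ (of possibly different partition posets) with $E_i=\bigcup_{\lambda\le\omega\in\Pi_i}D_\lambda^\omega$ are isomorphic if there is a poset isomorphism $g:\Pi_1\to\Pi_2$ and an increasing bijection $f:E_1\to E_2$ with $\delta_{g(\lambda)}^{g(\omega)}=f(\delta_\lambda^\omega)$ for every covering $\lambda\prec\omega$. A family of labellings is compatible with isomorphisms of subposets if every such isomorphism induces a map on labels sending increasing chains to increasing chains, non-increasing chains to non-increasing chains, and preserving the lexicographic preorder on chains. *)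

theory Defs
  imports "HOL-Library.Disjoint_Sets"
begin

definition partitions :: "nat \<Rightarrow> nat set set set" where
  "partitions n = {P. partition_on {1..n} P}"

definition refines :: "nat set set \<Rightarrow> nat set set \<Rightarrow> bool" where
  "refines l w \<longleftrightarrow> (\<forall>A\<in>l. \<exists>B\<in>w. A \<subseteq> B)"

definition covers :: "nat \<Rightarrow> nat set set \<Rightarrow> nat set set \<Rightarrow> bool" where
  "covers n l w \<longleftrightarrow> l \<in> partitions n \<and> w \<in> partitions n \<and> refines l w \<and> l \<noteq> w \<and>
     \<not> (\<exists>m\<in>partitions n. refines l m \<and> refines m w \<and> m \<noteq> l \<and> m \<noteq> w)"

definition Dset :: "nat set set \<Rightarrow> nat set set \<Rightarrow> nat set" where
  "Dset l w = {Min A | A. A \<in> l \<and> (\<exists>B\<in>w. A \<subseteq> B \<and> B \<notin> l)}"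

definition delta :: "nat set set \<Rightarrow> nat set set \<Rightarrow> nat set set" where
  "delta l w = {B \<inter> Dset l w | B. B \<in> w \<and> B \<inter> Dset l w \<noteq> {}}"

text \<open>The labelling: for a covering merging A_i and A_j, max(min A_i, min A_j),
  i.e. the maximum of D = {min A_i, min A_j}.\<close>
definition com_label :: "nat set set \<Rightarrow> nat set set \<Rightarrow> nat" where
  "com_label l w = Max (Dset l w)"

definition interval :: "nat \<Rightarrow> nat set set \<Rightarrow> nat set set \<Rightarrow> nat set set set" where
  "interval n a b = {p \<in> partitions n. refines a p \<and> refines p b}"

definition Eset :: "nat \<Rightarrow> nat set set \<Rightarrow> nat set set \<Rightarrow> nat set" where
  "Eset n a b = \<Union> {Dset l w | l w. l \<in> interval n a b \<and> w \<in> interval n a b \<and> refines l w}"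

definition subposet_iso ::
  "nat \<Rightarrow> nat set set \<Rightarrow> nat set set \<Rightarrow> nat \<Rightarrow> nat set set \<Rightarrow> nat set set
   \<Rightarrow> (nat set set \<Rightarrow> nat set set) \<Rightarrow> (nat \<Rightarrow> nat) \<Rightarrow> bool" where
  "subposet_iso n1 a1 b1 n2 a2 b2 g f \<longleftrightarrow>
     a1 \<in> partitions n1 \<and> b1 \<in> partitions n1 \<and> refines a1 b1 \<and>
     a2 \<in> partitions n2 \<and> b2 \<in> partitions n2 \<and> refines a2 b2 \<and>
     bij_betw g (interval n1 a1 b1) (interval n2 a2 b2) \<and>
     (\<forall>x\<in>interval n1 a1 b1. \<forall>y\<in>interval n1 a1 b1. refines x y \<longleftrightarrow> refines (g x) (g y)) \<and>
     bij_betw f (Eset n1 a1 b1) (Eset n2 a2 b2) \<and> strict_mono_on (Eset n1 a1 b1) f \<and>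
     (\<forall>l\<in>interval n1 a1 b1. \<forall>w\<in>interval n1 a1 b1.
        covers n1 l w \<longrightarrow> delta (g l) (g w) = (\<lambda>X. f ` X) ` delta l w)"

definition max_chain :: "nat \<Rightarrow> nat set set \<Rightarrow> nat set set \<Rightarrow> nat set set list \<Rightarrow> bool" where
  "max_chain n a b cs \<longleftrightarrow> cs \<noteq> [] \<and> hd cs = a \<and> last cs = b \<and>
     (\<forall>i. Suc i < length cs \<longrightarrow> covers n (cs ! i) (cs ! Suc i))"

definition label_word :: "(nat set set \<Rightarrow> nat set set \<Rightarrow> nat) \<Rightarrow> nat set set list \<Rightarrow> nat list" where
  "label_word lab cs = map (\<lambda>(x, y). lab x y) (zip cs (tl cs))"

definition increasing_word :: "nat list \<Rightarrow> bool" where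
  "increasing_word ws \<longleftrightarrow> sorted_wrt (<) ws"

definition lex_le :: "nat list \<Rightarrow> nat list \<Rightarrow> bool" where
  "lex_le u v \<longleftrightarrow> u = v \<or> (u, v) \<in> lexord {(x, y). x < y}"

definition compatible_with_isos :: "(nat set set \<Rightarrow> nat set set \<Rightarrow> nat) \<Rightarrow> bool" where
  "compatible_with_isos lab \<longleftrightarrow>
    (\<forall>n1 a1 b1 n2 a2 b2 g f. subposet_iso n1 a1 b1 n2 a2 b2 g f \<longrightarrow>
       (\<forall>cs. max_chain n1 a1 b1 cs \<longrightarrow>
          (increasing_word (label_word lab cs) \<longrightarrow> increasing_word (label_word lab (map g cs))) \<and>
          (\<not> increasing_word (label_word lab cs) \<longrightarrow> \<not> increasing_word (label_word lab (map g cs)))) \<and>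
       (\<forall>cs ds. max_chain n1 a1 b1 cs \<longrightarrow> max_chain n1 a1 b1 ds \<longrightarrow>
          lex_le (label_word lab cs) (label_word lab ds) \<longrightarrow>
          lex_le (label_word lab (map g cs)) (label_word lab (map g ds))))"

end

theory Submission
  imports Defs
begin

lemma refines_trans: "refines a b \<Longrightarrow> refines b c \<Longrightarrow> refines a c"
  unfolding refines_def by (meson order_trans)

lemma refines_refl: "refines a a"
  unfolding refines_def by blast

lemma lex_map:
  fixes f :: "nat \<Rightarrow> nat"
  assumes "strict_mono_on E f" "set u \<subseteq> E" "set v \<subseteq> E"
    "(u, v) \<in> lexord {(x, y). x < y}"
  shows "(map f u, map f v) \<in> lexord {(x::nat, y). x < y}"
  using assms(2-4)
proof (induction u arbitrary: v)
  case Nil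
  then show ?case by (cases v) auto
next
  case (Cons a u)
  then obtain b w where v: "v = b # w" by (cases v) auto
  show ?case using Cons strict_mono_on_less[OF assms(1), of a b] v by auto
qed

lemma sorted_map:
  fixes f :: "nat \<Rightarrow> nat"
  assumes "strict_mono_on E f" "set u \<subseteq> E"
  shows "sorted_wrt (<) (map f u) \<longleftrightarrow> sorted_wrt (<) (u::nat list)"
  using assms(2)
proof (induction u)
  case Nil
  then show ?case by simp
next
  case (Cons a u)
  then show ?case using strict_mono_on_less[OF assms(1), of a] by auto
qed

lemma Dset_sub:
  assumes "l \<in> partitions n"
  shows "Dset l w \<subseteq> \<Union> w \<inter> {1..n}"
proof
  fix x assume "x \<in> Dset l w"
  then obtain A B where x: "x = Min A" "A \<in> l" "B \<in> w" "A \<subseteq> B"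
    unfolding Dset_def by blast
  have "A \<noteq> {}" "A \<subseteq> {1..n}" using assms x(2) unfolding partitions_def partition_on_def by auto
  then have "Min A \<in> A" using finite_subset[OF _ finite_atLeastAtMost] by (meson Min_in)
  then show "x \<in> \<Union> w \<inter> {1..n}" using x \<open>A \<subseteq> {1..n}\<close> by blast
qed

lemma Union_delta:
  assumes "l \<in> partitions n"
  shows "\<Union> (delta l w) = Dset l w"
proof -
  have s: "Dset l w \<subseteq> \<Union> w" using Dset_sub[OF assms, of w] by blast
  show ?thesis
  proof
    show "\<Union> (delta l w) \<subseteq> Dset l w" unfolding delta_def by auto
    show "Dset l w \<subseteq> \<Union> (delta l w)"
    proof
      fix x assume x: "x \<in> Dset l w"
      then obtain B where B: "B \<in> w" "x \<in> B" using s by blast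
      then have "B \<inter> Dset l w \<in> delta l w" using x unfolding delta_def by blast
      then show "x \<in> \<Union> (delta l w)" using x B by blast
    qed
  qed
qed

lemma Dset_ne:
  assumes "covers n l w"
  shows "Dset l w \<noteq> {}"
proof
  assume e: "Dset l w = {}"
  have l: "partition_on {1..n} l" and w: "partition_on {1..n} w" and r: "refines l w" and ne: "l \<noteq> w"
    using assms unfolding covers_def partitions_def by auto
  have lw: "l \<subseteq> w"
  proof
    fix A assume A: "A \<in> l"
    then obtain B where B: "B \<in> w" "A \<subseteq> B" using r unfolding refines_def by blast
    have "B \<in> l"
    proof (rule ccontr)
      assume "B \<notin> l"
      then have "Min A \<in> Dset l w" unfolding Dset_def using A B by blast
      then show False using e by simp
    qed
    have "A \<noteq> {}" using l A unfolding partition_on_def by auto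
    then have "A = B" using l A \<open>B \<in> l\<close> B(2) unfolding partition_on_def disjoint_def by blast
    then show "A \<in> w" using B by simp
  qed
  have "w \<subseteq> l"
  proof
    fix C assume C: "C \<in> w"
    then obtain x where x: "x \<in> C" using w unfolding partition_on_def by (metis ex_in_conv)
    then have "x \<in> \<Union> l" using w l C unfolding partition_on_def by blast
    then obtain A where A: "A \<in> l" "x \<in> A" by blast
    then have "A \<in> w" using lw by blast
    then have "A = C" using w C A x unfolding partition_on_def disjoint_def by blast
    then show "C \<in> l" using A by simp
  qed
  then show False using lw ne by simp
qed

lemma chain_refines:
  assumes "max_chain n a b cs" "i \<le> j" "j < length cs"
  shows "refines (cs ! i) (cs ! j)"
  using assms(2,3)
proof (induction j)
  case 0
  then show ?case by (simp add: refines_refl)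
next
  case (Suc j)
  show ?case
  proof (cases "i = Suc j")
    case True then show ?thesis by (simp add: refines_refl)
  next
    case False
    then have "refines (cs ! i) (cs ! j)" using Suc by simp
    moreover have "covers n (cs ! j) (cs ! Suc j)" using assms(1) Suc.prems unfolding max_chain_def by blast
    ultimately show ?thesis unfolding covers_def using refines_trans by blast
  qed
qed

lemma chain_interval:
  assumes "max_chain n a b cs" "a \<in> partitions n" "i < length cs"
  shows "cs ! i \<in> interval n a b"
proof -
  have h: "cs ! 0 = a" "cs ! (length cs - 1) = b"
    using assms(1) unfolding max_chain_def by (auto simp: hd_conv_nth last_conv_nth)
  have "refines a (cs ! i)" using chain_refines[OF assms(1), of 0 i] h assms(3) by simp
  moreover have "refines (cs ! i) b" using chain_refines[OF assms(1), of i "length cs - 1"] h assms(3) by simp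
  moreover have "cs ! i \<in> partitions n"
  proof (cases i)
    case 0 then show ?thesis using h assms by simp
  next
    case (Suc k)
    then have "covers n (cs ! k) (cs ! i)" using assms(1,3) unfolding max_chain_def by auto
    then show ?thesis unfolding covers_def by simp
  qed
  ultimately show ?thesis unfolding interval_def by simp
qed

lemma label_step:
  assumes iso: "subposet_iso n1 a1 b1 n2 a2 b2 g f"
    and l: "l \<in> interval n1 a1 b1" and w: "w \<in> interval n1 a1 b1" and c: "covers n1 l w"
  shows "com_label (g l) (g w) = f (com_label l w) \<and> com_label l w \<in> Eset n1 a1 b1"
proof -
  let ?E = "Eset n1 a1 b1"
  have gl: "g l \<in> interval n2 a2 b2" "g w \<in> interval n2 a2 b2"
    using iso l w unfolding subposet_iso_def bij_betw_def by auto
  have lp: "l \<in> partitions n1" using l unfolding interval_def by simp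
  have glp: "g l \<in> partitions n2" using gl unfolding interval_def by simp
  have del: "delta (g l) (g w) = (\<lambda>X. f ` X) ` delta l w"
    using iso l w c unfolding subposet_iso_def by blast
  have D: "Dset (g l) (g w) = f ` Dset l w"
  proof -
    have "Dset (g l) (g w) = \<Union> (delta (g l) (g w))" using Union_delta[OF glp] by simp
    also have "\<dots> = f ` \<Union> (delta l w)" using del by auto
    also have "\<dots> = f ` Dset l w" using Union_delta[OF lp] by simp
    finally show ?thesis .
  qed
  have sub: "Dset l w \<subseteq> ?E"
    unfolding Eset_def using l w c unfolding covers_def by blast
  have fin: "finite (Dset l w)" using Dset_sub[OF lp, of w] finite_subset by blast
  have ne: "Dset l w \<noteq> {}" using Dset_ne[OF c] .
  have sm: "strict_mono_on ?E f" using iso unfolding subposet_iso_def by blast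
  let ?m = "Max (Dset l w)"
  have m: "?m \<in> Dset l w" using Max_in[OF fin ne] .
  have "Max (f ` Dset l w) = f ?m"
  proof (rule Max_eqI)
    show "finite (f ` Dset l w)" using fin by simp
    show "f ?m \<in> f ` Dset l w" using m by simp
    fix y assume "y \<in> f ` Dset l w"
    then obtain x where x: "x \<in> Dset l w" "y = f x" by blast
    have "x \<le> ?m" using Max_ge[OF fin x(1)] .
    then show "y \<le> f ?m" using x strict_mono_on_less_eq[OF sm, of x ?m] m sub by auto
  qed
  then show ?thesis unfolding com_label_def using D m sub by auto
qed

lemma label_word_map:
  assumes iso: "subposet_iso n1 a1 b1 n2 a2 b2 g f" and mc: "max_chain n1 a1 b1 cs"
  shows "label_word com_label (map g cs) = map f (label_word com_label cs)
     \<and> set (label_word com_label cs) \<subseteq> Eset n1 a1 b1"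
proof -
  have a1: "a1 \<in> partitions n1" using iso unfolding subposet_iso_def by blast
  have st: "com_label (g (cs ! i)) (g (cs ! Suc i)) = f (com_label (cs ! i) (cs ! Suc i))
      \<and> com_label (cs ! i) (cs ! Suc i) \<in> Eset n1 a1 b1" if "Suc i < length cs" for i
    using label_step[OF iso chain_interval[OF mc a1] chain_interval[OF mc a1]] mc that
    unfolding max_chain_def by auto
  show ?thesis
  proof
    show "label_word com_label (map g cs) = map f (label_word com_label cs)"
      unfolding label_word_def
      by (rule nth_equalityI) (auto simp: nth_tl st)
    show "set (label_word com_label cs) \<subseteq> Eset n1 a1 b1"
      unfolding label_word_def
      by (auto simp: set_conv_nth nth_tl st)
  qed
qed

theorem mainTheorem4:
  shows "compatible_with_isos com_label"
  unfolding compatible_with_isos_def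
proof (intro allI impI conjI)
  fix n1 a1 b1 n2 a2 b2 g f cs ds
  assume iso: "subposet_iso n1 a1 b1 n2 a2 b2 g f"
  have sm: "strict_mono_on (Eset n1 a1 b1) f" using iso unfolding subposet_iso_def by blast
  {
    assume mc: "max_chain n1 a1 b1 cs"
    note L = label_word_map[OF iso mc]
    show "increasing_word (label_word com_label cs) \<Longrightarrow> increasing_word (label_word com_label (map g cs))"
      using L sorted_map[OF sm] unfolding increasing_word_def by auto
    show "\<not> increasing_word (label_word com_label cs) \<Longrightarrow> \<not> increasing_word (label_word com_label (map g cs))"
      using L sorted_map[OF sm] unfolding increasing_word_def by auto
  }
  {
    assume mc: "max_chain n1 a1 b1 cs" and md: "max_chain n1 a1 b1 ds"
      and le: "lex_le (label_word com_label cs) (label_word com_label ds)"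
    note L = label_word_map[OF iso mc] and M = label_word_map[OF iso md]
    show "lex_le (label_word com_label (map g cs)) (label_word com_label (map g ds))"
      using le L M lex_map[OF sm] unfolding lex_le_def by auto
  }
qed

end
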